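(* Let $(M,\varphi,\xi,\eta,g)$ be a $3$-dimensional $f$-Kenmotsu manifold and let $\gamma(s)$ be a non-geodesic, arc-length parametrized proper triharmonic Frenet curve in $M$ with Frenet frame $\{T,N,B\}$, constant curvature $k_1$ and nonzero torsion $k_2$. Then $\gamma$ is a Frenet helix (i.e. $k_2$ is also constant). Further, with $A:=\frac r2+2(f^2+f')$ and $\Lambda:=\frac r2+3(f^2+f')$, $k_1$ and $k_2$ satisfy \begin{align*} &(k_1^2+k_2^2)^2=(2k_1^2+k_2^2)\big(A-\Lambda(\eta(T)^2+\eta(N)^2)\big)+k_1k_2\,\eta(T)\eta(B)\,\Lambda,\\ &\big(k_1k_2\eta(T)+(2k_1^2+k_2^2)\eta(B)\big)\Lambda\,\eta(N)=0. \end{align*}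
   Context: An almost contact metric manifold $(M^{2n+1},\varphi,\xi,\eta,g)$ has $\varphi^2=-I+\eta\otimes\xi$, $\eta(\xi)=1$, $\varphi\xi=0$, $\eta\circ\varphi=0$, $\eta(X)=g(X,\xi)$, $g(\varphi X,\varphi Y)=g(X,Y)-\eta(X)\eta(Y)$. It is $f$-Kenmotsu if $(\nabla_X\varphi)Y=f(g(\varphi X,Y)\xi-\eta(Y)\varphi X)$ and $\nabla_X\xi=f(X-\eta(X)\xi)$ for smooth $f$ with $df\wedge\eta=0$. In dimension 3 the curvature is $R(X,Y)Z=(\frac r2+2(f^2+f'))(g(Y,Z)X-g(X,Z)Y)-(\frac r2+3(f^2+f'))(g(Y,Z)\eta(X)\xi-g(X,Z)\eta(Y)\xi-\eta(X)\eta(Z)Y+\eta(Y)\eta(Z)X)$, with $r$ the scalar curvature and $f'$ the derivative of $f$ (regarded along the curve as functions of $s$). Frenet equations: $\nabla_TT=k_1N$, $\nabla_TN=-k_1T+k_2B$, $\nabla_TB=-k_2N$. A curve is triharmonic if $\tau_3(\gamma)=\nabla_T^5T+R(\nabla_T^3T,T)T-R(\nabla_T^2T,\nabla_TT)T=0$, and proper triharmonic if triharmonic but not harmonic (not a geodesic). A Frenet helix is a Frenet curve with constant nonzero curvature and torsion. *)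

theory Defs
  imports "HOL-Analysis.Analysis"
begin

(* Vector fields along the curve gamma, expressed in a parallel orthonormal
   frame along gamma: they become maps  real => 'a  into a 3-dimensional
   Euclidean space, the metric g becomes the inner product and the
   covariant derivative nabla_T becomes the ordinary derivative in s. *)

fun iter_vd :: "nat \<Rightarrow> (real \<Rightarrow> 'a::real_normed_vector) \<Rightarrow> real \<Rightarrow> 'a" where
  "iter_vd 0 F = F"
| "iter_vd (Suc n) F = (\<lambda>s. vector_derivative (iter_vd n F) (at s))"

definition smooth_along :: "real set \<Rightarrow> (real \<Rightarrow> 'a::real_normed_vector) \<Rightarrow> bool" where
  "smooth_along I F \<longleftrightarrow>
     (\<forall>n. \<forall>s\<in>I. (iter_vd n F has_vector_derivative iter_vd (Suc n) F s) (at s))"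

definition fK_curv :: "real \<Rightarrow> real \<Rightarrow> real \<Rightarrow> 'a::real_inner \<Rightarrow> 'a \<Rightarrow> 'a \<Rightarrow> 'a \<Rightarrow> 'a" where
  "fK_curv r f fp xi X Y Z =
     (r/2 + 2*(f^2 + fp)) *\<^sub>R ((Y \<bullet> Z) *\<^sub>R X - (X \<bullet> Z) *\<^sub>R Y)
   - (r/2 + 3*(f^2 + fp)) *\<^sub>R
       ( ((Y \<bullet> Z) * (X \<bullet> xi)) *\<^sub>R xi - ((X \<bullet> Z) * (Y \<bullet> xi)) *\<^sub>R xi
       - ((X \<bullet> xi) * (Z \<bullet> xi)) *\<^sub>R Y + ((Y \<bullet> xi) * (Z \<bullet> xi)) *\<^sub>R X)"

definition frenet_curve ::
  "real set \<Rightarrow> (real \<Rightarrow> 'a::real_inner) \<Rightarrow> (real \<Rightarrow> 'a) \<Rightarrow> (real \<Rightarrow> 'a)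
     \<Rightarrow> (real \<Rightarrow> real) \<Rightarrow> (real \<Rightarrow> real) \<Rightarrow> bool" where
  "frenet_curve I T N B k1 k2 \<longleftrightarrow>
     (\<forall>s\<in>I.
        T s \<bullet> T s = 1 \<and> N s \<bullet> N s = 1 \<and> B s \<bullet> B s = 1 \<and>
        T s \<bullet> N s = 0 \<and> T s \<bullet> B s = 0 \<and> N s \<bullet> B s = 0 \<and>
        k1 s > 0 \<and>
        (T has_vector_derivative (k1 s *\<^sub>R N s)) (at s) \<and>
        (N has_vector_derivative (- k1 s *\<^sub>R T s + k2 s *\<^sub>R B s)) (at s) \<and>
        (B has_vector_derivative (- k2 s *\<^sub>R N s)) (at s))"

definition fK_along :: "real set \<Rightarrow> (real \<Rightarrow> 'a::real_inner) \<Rightarrow> (real \<Rightarrow> 'a) \<Rightarrow> (real \<Rightarrow> real) \<Rightarrow> bool" where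
  "fK_along I T xi f \<longleftrightarrow>
     (\<forall>s\<in>I. xi s \<bullet> xi s = 1 \<and>
        (xi has_vector_derivative (f s *\<^sub>R (T s - (T s \<bullet> xi s) *\<^sub>R xi s))) (at s))"

(* tension field tau_3 along the curve, R s being the curvature tensor at gamma(s) *)
definition tau3 :: "(real \<Rightarrow> 'a \<Rightarrow> 'a \<Rightarrow> 'a \<Rightarrow> 'a) \<Rightarrow> (real \<Rightarrow> 'a::real_normed_vector) \<Rightarrow> real \<Rightarrow> 'a" where
  "tau3 R T s = iter_vd 5 T s + R s (iter_vd 3 T s) (T s) (T s)
                - R s (iter_vd 2 T s) (iter_vd 1 T s) (T s)"

definition triharmonic :: "real set \<Rightarrow> (real \<Rightarrow> 'a \<Rightarrow> 'a \<Rightarrow> 'a \<Rightarrow> 'a) \<Rightarrow> (real \<Rightarrow> 'a::real_normed_vector) \<Rightarrow> bool" where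
  "triharmonic I R T \<longleftrightarrow> (\<forall>s\<in>I. tau3 R T s = 0)"

definition proper_triharmonic :: "real set \<Rightarrow> (real \<Rightarrow> 'a \<Rightarrow> 'a \<Rightarrow> 'a \<Rightarrow> 'a) \<Rightarrow> (real \<Rightarrow> 'a::real_normed_vector) \<Rightarrow> bool" where
  "proper_triharmonic I R T \<longleftrightarrow> triharmonic I R T \<and> \<not> (\<forall>s\<in>I. iter_vd 1 T s = 0)"

definition frenet_helix :: "real set \<Rightarrow> (real \<Rightarrow> real) \<Rightarrow> (real \<Rightarrow> real) \<Rightarrow> bool" where
  "frenet_helix I k1 k2 \<longleftrightarrow>
     (\<exists>c1 c2. c1 \<noteq> 0 \<and> c2 \<noteq> 0 \<and> (\<forall>s\<in>I. k1 s = c1 \<and> k2 s = c2))"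

end

theory Submission
  imports Defs
begin

lemma vd_open:
  assumes "open I" "s \<in> I" "\<forall>x\<in>I. F x = G x" "(G has_vector_derivative G') (at s)"
  shows "vector_derivative F (at s) = G'"
proof -
  have "(F has_vector_derivative G') (at s)"
    by (rule has_vector_derivative_transform_within_open[OF assms(4) assms(1) assms(2)]) (use assms(3) in auto)
  thus ?thesis by (rule vector_derivative_at)
qed

lemma step:
  assumes fc: "frenet_curve I T N B k1 k2" and op: "open I"
    and eq: "\<forall>x\<in>I. iter_vd n T x = a x *\<^sub>R T x + b x *\<^sub>R N x + d x *\<^sub>R B x"
    and s: "s \<in> I"
    and da: "(a has_real_derivative a') (at s)" and db: "(b has_real_derivative b') (at s)"
    and dd: "(d has_real_derivative d') (at s)"
    and e1: "A = a' - k1 s * b s" and e2: "BB = k1 s * a s + b' - k2 s * d s"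
    and e3: "D = k2 s * b s + d'"
    and m: "m = Suc n"
  shows "iter_vd m T s = A *\<^sub>R T s + BB *\<^sub>R N s + D *\<^sub>R B s"
proof -
  have hT: "(T has_vector_derivative (k1 s *\<^sub>R N s)) (at s)"
   and hN: "(N has_vector_derivative (- k1 s *\<^sub>R T s + k2 s *\<^sub>R B s)) (at s)"
   and hB: "(B has_vector_derivative (- k2 s *\<^sub>R N s)) (at s)"
    using fc s unfolding frenet_curve_def by auto
  have "((\<lambda>x. a x *\<^sub>R T x + b x *\<^sub>R N x + d x *\<^sub>R B x) has_vector_derivative
     (a s *\<^sub>R (k1 s *\<^sub>R N s) + a' *\<^sub>R T s + (b s *\<^sub>R (- k1 s *\<^sub>R T s + k2 s *\<^sub>R B s) + b' *\<^sub>R N s)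
      + (d s *\<^sub>R (- k2 s *\<^sub>R N s) + d' *\<^sub>R B s))) (at s)"
    by (intro has_vector_derivative_add has_vector_derivative_scaleR da db dd hT hN hB)
  moreover have "a s *\<^sub>R (k1 s *\<^sub>R N s) + a' *\<^sub>R T s + (b s *\<^sub>R (- k1 s *\<^sub>R T s + k2 s *\<^sub>R B s) + b' *\<^sub>R N s)
      + (d s *\<^sub>R (- k2 s *\<^sub>R N s) + d' *\<^sub>R B s) = A *\<^sub>R T s + BB *\<^sub>R N s + D *\<^sub>R B s"
    unfolding e1 e2 e3 by (simp add: algebra_simps)
  ultimately have "((\<lambda>x. a x *\<^sub>R T x + b x *\<^sub>R N x + d x *\<^sub>R B x) has_vector_derivative
      (A *\<^sub>R T s + BB *\<^sub>R N s + D *\<^sub>R B s)) (at s)" by simp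
  then show ?thesis using vd_open[OF op s eq] m by simp
qed

theorem theorem2:
  fixes T N B xi :: "real \<Rightarrow> 'a::euclidean_space"
    and k1 k2 r f fp :: "real \<Rightarrow> real"
    and I :: "real set"
  assumes "DIM('a) = 3"
    and "open I" and "connected I" and "I \<noteq> {}"
    and "frenet_curve I T N B k1 k2"
    and "smooth_along I T" and "smooth_along I N" and "smooth_along I B" and "smooth_along I k2"
    and "fK_along I T xi f"
    and "\<exists>c. \<forall>s\<in>I. k1 s = c"
    and "\<forall>s\<in>I. k2 s \<noteq> 0"
    and "proper_triharmonic I (\<lambda>s. fK_curv (r s) (f s) (fp s) (xi s)) T"
  shows "frenet_helix I k1 k2 \<and>
    (\<forall>s\<in>I.
       let A = r s / 2 + 2 * ((f s)^2 + fp s);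
           L = r s / 2 + 3 * ((f s)^2 + fp s);
           eT = T s \<bullet> xi s; eN = N s \<bullet> xi s; eB = B s \<bullet> xi s
       in ((k1 s)^2 + (k2 s)^2)^2
            = (2 * (k1 s)^2 + (k2 s)^2) * (A - L * (eT^2 + eN^2))
              + k1 s * k2 s * eT * eB * L
        \<and> (k1 s * k2 s * eT + (2 * (k1 s)^2 + (k2 s)^2) * eB) * L * eN = 0)"
proof -
  note fc = assms(5)
  note op = assms(2)
  obtain c where hc: "\<forall>s\<in>I. k1 s = c" using assms(11) by blast
  obtain s0 where s0: "s0 \<in> I" using assms(4) by blast
  have cpos: "c > 0" using fc s0 hc unfolding frenet_curve_def by auto
  define D1 where "D1 = iter_vd 1 k2"
  define D2 where "D2 = iter_vd 2 k2"
  define D3 where "D3 = iter_vd 3 k2"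
  have sm: "\<And>n s. s \<in> I \<Longrightarrow> (iter_vd n k2 has_real_derivative iter_vd (Suc n) k2 s) (at s)"
    using assms(9) unfolding smooth_along_def has_real_derivative_iff_has_vector_derivative by blast
  have dk: "\<And>s. s \<in> I \<Longrightarrow> (k2 has_real_derivative D1 s) (at s)"
    using sm[of _ 0] unfolding D1_def by simp
  have dk1: "\<And>s. s \<in> I \<Longrightarrow> (D1 has_real_derivative D2 s) (at s)"
    using sm[of _ 1] unfolding D1_def D2_def by (simp add: numeral_eq_Suc)
  have dk2: "\<And>s. s \<in> I \<Longrightarrow> (D2 has_real_derivative D3 s) (at s)"
    using sm[of _ 2] unfolding D3_def D2_def by (simp add: numeral_eq_Suc)
  have it1: "\<forall>x\<in>I. iter_vd 1 T x = 0 *\<^sub>R T x + c *\<^sub>R N x + 0 *\<^sub>R B x"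
  proof
    fix x assume x: "x \<in> I"
    have "(T has_vector_derivative (k1 x *\<^sub>R N x)) (at x)" using fc x unfolding frenet_curve_def by auto
    then show "iter_vd 1 T x = 0 *\<^sub>R T x + c *\<^sub>R N x + 0 *\<^sub>R B x"
      using vector_derivative_at hc x by fastforce
  qed
  have it2: "\<forall>x\<in>I. iter_vd 2 T x = (- (c^2)) *\<^sub>R T x + 0 *\<^sub>R N x + (c * k2 x) *\<^sub>R B x"
  proof
    fix x assume x: "x \<in> I"
    show "iter_vd 2 T x = (- (c^2)) *\<^sub>R T x + 0 *\<^sub>R N x + (c * k2 x) *\<^sub>R B x"
      by (rule step[OF fc op it1 x DERIV_const DERIV_const DERIV_const]) (use hc x in \<open>auto simp: power2_eq_square\<close>)
  qed
  have it3: "\<forall>x\<in>I. iter_vd 3 T x = 0 *\<^sub>R T x + (- (c^3) - c * k2 x ^ 2) *\<^sub>R N x + (c * D1 x) *\<^sub>R B x"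
  proof
    fix x assume x: "x \<in> I"
    have d: "((\<lambda>x. c * k2 x) has_real_derivative c * D1 x) (at x)"
      by (auto intro!: derivative_eq_intros dk[OF x])
    show "iter_vd 3 T x = 0 *\<^sub>R T x + (- (c^3) - c * k2 x ^ 2) *\<^sub>R N x + (c * D1 x) *\<^sub>R B x"
      by (rule step[OF fc op it2 x DERIV_const DERIV_const d]) (use hc x in \<open>auto simp: power2_eq_square power3_eq_cube\<close>)
  qed
  have it4: "\<forall>x\<in>I. iter_vd 4 T x = (c^4 + c^2 * k2 x ^ 2) *\<^sub>R T x + (-3 * c * k2 x * D1 x) *\<^sub>R N x
      + (- (c^3) * k2 x - c * k2 x ^ 3 + c * D2 x) *\<^sub>R B x"
  proof
    fix x assume x: "x \<in> I"
    have db: "((\<lambda>x. - (c^3) - c * k2 x ^ 2) has_real_derivative - (c * (2 * k2 x * D1 x))) (at x)"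
      by (auto intro!: derivative_eq_intros dk[OF x])
    have d: "((\<lambda>x. c * D1 x) has_real_derivative c * D2 x) (at x)"
      by (auto intro!: derivative_eq_intros dk1[OF x])
    show "iter_vd 4 T x = (c^4 + c^2 * k2 x ^ 2) *\<^sub>R T x + (-3 * c * k2 x * D1 x) *\<^sub>R N x
      + (- (c^3) * k2 x - c * k2 x ^ 3 + c * D2 x) *\<^sub>R B x"
      by (rule step[OF fc op it3 x DERIV_const db d]) (use hc x in \<open>auto simp: algebra_simps power2_eq_square power3_eq_cube numeral_eq_Suc\<close>)
  qed
  have it5: "\<forall>x\<in>I. iter_vd 5 T x = (5 * c^2 * k2 x * D1 x) *\<^sub>R T x
      + (c^5 + 2 * c^3 * k2 x ^ 2 + c * k2 x ^ 4 - 3 * c * D1 x ^ 2 - 4 * c * k2 x * D2 x) *\<^sub>R N x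
      + (c * D3 x - c * D1 x * (c^2 + 6 * k2 x ^ 2)) *\<^sub>R B x"
  proof
    fix x assume x: "x \<in> I"
    have da: "((\<lambda>x. c^4 + c^2 * k2 x ^ 2) has_real_derivative c^2 * (2 * k2 x * D1 x)) (at x)"
      by (auto intro!: derivative_eq_intros dk[OF x])
    have db: "((\<lambda>x. -3 * c * k2 x * D1 x) has_real_derivative -3 * c * (D1 x * D1 x + k2 x * D2 x)) (at x)"
      by (auto intro!: derivative_eq_intros dk[OF x] dk1[OF x] simp: algebra_simps)
    have d: "((\<lambda>x. - (c^3) * k2 x - c * k2 x ^ 3 + c * D2 x) has_real_derivative
        - (c^3) * D1 x - c * (3 * k2 x ^ 2 * D1 x) + c * D3 x) (at x)"
      by (auto intro!: derivative_eq_intros dk[OF x] dk2[OF x] simp: algebra_simps)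
    show "iter_vd 5 T x = (5 * c^2 * k2 x * D1 x) *\<^sub>R T x
      + (c^5 + 2 * c^3 * k2 x ^ 2 + c * k2 x ^ 4 - 3 * c * D1 x ^ 2 - 4 * c * k2 x * D2 x) *\<^sub>R N x
      + (c * D3 x - c * D1 x * (c^2 + 6 * k2 x ^ 2)) *\<^sub>R B x"
      by (rule step[OF fc op it4 x da db d]) (use hc x in \<open>auto simp: algebra_simps power2_eq_square power3_eq_cube numeral_eq_Suc\<close>)
  qed
  define R where "R = (\<lambda>s. fK_curv (r s) (f s) (fp s) (xi s))"
  have tau0: "\<And>s. s \<in> I \<Longrightarrow> tau3 R T s = 0"
    using assms(13) unfolding proper_triharmonic_def triharmonic_def R_def by blast
  have comps: "tau3 R T s \<bullet> T s = 5 * c^2 * k2 s * D1 s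
     \<and> tau3 R T s \<bullet> N s = c * (((c^2 + k2 s ^2)^2 - 3 * D1 s ^ 2 - 4 * k2 s * D2 s)
          - (2 * c^2 + k2 s ^2) * ((r s / 2 + 2 * ((f s)^2 + fp s)) - (r s / 2 + 3 * ((f s)^2 + fp s)) * ((T s \<bullet> xi s)^2 + (N s \<bullet> xi s)^2))
          - c * k2 s * (T s \<bullet> xi s) * (B s \<bullet> xi s) * (r s / 2 + 3 * ((f s)^2 + fp s))
          - D1 s * (B s \<bullet> xi s) * (N s \<bullet> xi s) * (r s / 2 + 3 * ((f s)^2 + fp s)))
     \<and> tau3 R T s \<bullet> B s = c * (D3 s - D1 s * (c^2 + 6 * k2 s ^ 2) + (r s / 2 + 2 * ((f s)^2 + fp s)) * D1 s
          - (r s / 2 + 3 * ((f s)^2 + fp s)) * D1 s * ((B s \<bullet> xi s)^2 + (T s \<bullet> xi s)^2)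
          + (r s / 2 + 3 * ((f s)^2 + fp s)) * (N s \<bullet> xi s) * ((2 * c^2 + k2 s ^ 2) * (B s \<bullet> xi s) + c * k2 s * (T s \<bullet> xi s)))"
    if s: "s \<in> I" for s
  proof -
    have o: "T s \<bullet> T s = 1" "N s \<bullet> N s = 1" "B s \<bullet> B s = 1"
      "T s \<bullet> N s = 0" "T s \<bullet> B s = 0" "N s \<bullet> B s = 0"
      "N s \<bullet> T s = 0" "B s \<bullet> T s = 0" "B s \<bullet> N s = 0"
      using fc s unfolding frenet_curve_def by (auto simp: inner_commute)
    define eT where "eT = T s \<bullet> xi s"
    define eN where "eN = N s \<bullet> xi s"
    define eB where "eB = B s \<bullet> xi s"
    have e: "T s \<bullet> xi s = eT" "N s \<bullet> xi s = eN" "B s \<bullet> xi s = eB"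
      "xi s \<bullet> T s = eT" "xi s \<bullet> N s = eN" "xi s \<bullet> B s = eB"
      unfolding eT_def eN_def eB_def by (auto simp: inner_commute)
    have X: "tau3 R T s = iter_vd 5 T s + R s (iter_vd 3 T s) (T s) (T s)
                - R s (iter_vd 2 T s) (iter_vd 1 T s) (T s)" unfolding tau3_def by simp
    show ?thesis
      unfolding X unfolding R_def fK_curv_def it1[rule_format, OF s] it2[rule_format, OF s]
        it3[rule_format, OF s] it4[rule_format, OF s] it5[rule_format, OF s]
      by (simp add: inner_add_left inner_diff_left inner_add_right inner_diff_right o e eT_def[symmetric] eN_def[symmetric] eB_def[symmetric]; simp add: algebra_simps power2_eq_square power3_eq_cube numeral_eq_Suc)
  qed
  have D1z: "D1 s = 0" if s: "s \<in> I" for s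
  proof -
    have "5 * c^2 * k2 s * D1 s = 0" using comps[OF s] tau0[OF s] by simp
    then show ?thesis using cpos assms(12) s by simp
  qed
  have zder: "G' = 0" if s: "s \<in> I" and z: "\<forall>x\<in>I. G x = 0" and d: "(G has_real_derivative G') (at s)"
    for G :: "real \<Rightarrow> real" and G' s
  proof -
    have "((\<lambda>_. 0::real) has_vector_derivative 0) (at s)" by simp
    then have "(G has_vector_derivative 0) (at s)"
      by (rule has_vector_derivative_transform_within_open[OF _ op s]) (use z in auto)
    then have "(G has_real_derivative 0) (at s)" by (simp add: has_real_derivative_iff_has_vector_derivative)
    then show ?thesis using d DERIV_unique by blast
  qed
  have D2z: "D2 s = 0" if s: "s \<in> I" for s
    using zder[OF s _ dk1[OF s]] D1z by blast
  have D3z: "D3 s = 0" if s: "s \<in> I" for s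
    using zder[OF s _ dk2[OF s]] D2z by blast
  have cont: "continuous_on I k2"
    using dk DERIV_isCont continuous_at_imp_continuous_on by blast
  obtain c2 where hc2: "\<And>x. x \<in> I \<Longrightarrow> k2 x = c2"
    by (rule DERIV_zero_connected_constant[OF assms(3) op finite.emptyI cont]) (use dk D1z in auto)
  have helix: "frenet_helix I k1 k2"
    unfolding frenet_helix_def
    using cpos hc hc2 assms(12) s0 by (intro exI[of _ c] exI[of _ c2]) auto
  have eqs: "let A = r s / 2 + 2 * ((f s)^2 + fp s);
           L = r s / 2 + 3 * ((f s)^2 + fp s);
           eT = T s \<bullet> xi s; eN = N s \<bullet> xi s; eB = B s \<bullet> xi s
       in ((k1 s)^2 + (k2 s)^2)^2
            = (2 * (k1 s)^2 + (k2 s)^2) * (A - L * (eT^2 + eN^2))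
              + k1 s * k2 s * eT * eB * L
        \<and> (k1 s * k2 s * eT + (2 * (k1 s)^2 + (k2 s)^2) * eB) * L * eN = 0" if s: "s \<in> I" for s
  proof -
    have n: "c * (((c^2 + k2 s ^2)^2)
          - (2 * c^2 + k2 s ^2) * ((r s / 2 + 2 * ((f s)^2 + fp s)) - (r s / 2 + 3 * ((f s)^2 + fp s)) * ((T s \<bullet> xi s)^2 + (N s \<bullet> xi s)^2))
          - c * k2 s * (T s \<bullet> xi s) * (B s \<bullet> xi s) * (r s / 2 + 3 * ((f s)^2 + fp s))) = 0"
      using comps[OF s] tau0[OF s] D1z[OF s] D2z[OF s] by simp
    have b: "c * ((r s / 2 + 3 * ((f s)^2 + fp s)) * (N s \<bullet> xi s) * ((2 * c^2 + k2 s ^ 2) * (B s \<bullet> xi s) + c * k2 s * (T s \<bullet> xi s))) = 0"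
      using comps[OF s] tau0[OF s] D1z[OF s] D3z[OF s] by simp
    have c0: "c \<noteq> 0" using cpos by simp
    have n2: "((c^2 + k2 s ^2)^2)
          - (2 * c^2 + k2 s ^2) * ((r s / 2 + 2 * ((f s)^2 + fp s)) - (r s / 2 + 3 * ((f s)^2 + fp s)) * ((T s \<bullet> xi s)^2 + (N s \<bullet> xi s)^2))
          - c * k2 s * (T s \<bullet> xi s) * (B s \<bullet> xi s) * (r s / 2 + 3 * ((f s)^2 + fp s)) = 0"
      using n c0 by (simp only: mult_eq_0_iff) simp
    have b2: "(r s / 2 + 3 * ((f s)^2 + fp s)) * (N s \<bullet> xi s) * ((2 * c^2 + k2 s ^ 2) * (B s \<bullet> xi s) + c * k2 s * (T s \<bullet> xi s)) = 0"
      using b c0 by (simp only: mult_eq_0_iff) simp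
    have k: "k1 s = c" using hc s by simp
    show ?thesis unfolding Let_def k
    proof
      show "(c\<^sup>2 + (k2 s)\<^sup>2)\<^sup>2 =
    (2 * c\<^sup>2 + (k2 s)\<^sup>2) *
    (r s / 2 + 2 * ((f s)\<^sup>2 + fp s) - (r s / 2 + 3 * ((f s)\<^sup>2 + fp s)) * ((T s \<bullet> xi s)\<^sup>2 + (N s \<bullet> xi s)\<^sup>2)) +
    c * k2 s * (T s \<bullet> xi s) * (B s \<bullet> xi s) * (r s / 2 + 3 * ((f s)\<^sup>2 + fp s))"
        using n2 by linarith
      show "(c * k2 s * (T s \<bullet> xi s) + (2 * c\<^sup>2 + (k2 s)\<^sup>2) * (B s \<bullet> xi s)) * (r s / 2 + 3 * ((f s)\<^sup>2 + fp s)) * (N s \<bullet> xi s) = 0"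
        using b2 by (simp add: algebra_simps)
    qed
  qed
  show ?thesis using helix eqs by blast
qed

end
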